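(* For every $n$-outcome forecast domain $\mathcal{D}$, the quadratic scoring rule $s(\mathbf{p};j)=2p_j-\sum_{k=1}^n p_k^2$ on $\mathcal{D}$ has convex exposure.
   Context: $\Delta^n$ is the standard simplex in $\mathbb{R}^n$; an $n$-outcome forecast domain is a convex $(n-1)$-dimensional subset of $\Delta^n$. For a proper scoring rule $s$ with expected reward function $G(\mathbf{p})=\sum_j p_j s(\mathbf{p};j)$ (here $G(\mathbf{p})=\sum_j p_j^2$), the exposure function is $\mathbf{g}=\nabla G$, with values understood modulo translation by the all-ones vector (equivalently projected onto $\{\mathbf{x}:\sum_i x_i=0\}$). Convex exposure means the range of $\mathbf{g}$ on $\mathcal{D}$ is a convex set. *)

theory Defs
  imports "HOL-Analysis.Analysis"
begin

text \<open>Outcomes are indexed by a finite type 'n (n = CARD('n)); forecasts live in real^'n.\<close>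

definition prob_simplex :: "(real ^ 'n::finite) set" where
  "prob_simplex = {p. (\<forall>i. 0 \<le> p $ i) \<and> (\<Sum>i\<in>UNIV. p $ i) = 1}"

definition forecast_domain :: "(real ^ 'n::finite) set \<Rightarrow> bool" where
  "forecast_domain D \<longleftrightarrow> D \<subseteq> prob_simplex \<and> convex D \<and> aff_dim D = int CARD('n) - 1"

definition quad_score :: "real ^ 'n::finite \<Rightarrow> 'n \<Rightarrow> real" where
  "quad_score p j = 2 * p $ j - (\<Sum>k\<in>UNIV. (p $ k)^2)"

definition expected_reward :: "(real ^ 'n::finite \<Rightarrow> 'n \<Rightarrow> real) \<Rightarrow> real ^ 'n \<Rightarrow> real" where
  "expected_reward s p = (\<Sum>j\<in>UNIV. p $ j * s p j)"

definition exposure :: "(real ^ 'n::finite \<Rightarrow> 'n \<Rightarrow> real) \<Rightarrow> real ^ 'n \<Rightarrow> real ^ 'n" where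
  "exposure s p = (THE g. (expected_reward s has_derivative (\<lambda>h. g \<bullet> h)) (at p))"

text \<open>Projection onto {x. sum_i x_i = 0}, i.e. quotient by translation along the all-ones vector.\<close>
definition proj0 :: "real ^ 'n::finite \<Rightarrow> real ^ 'n" where
  "proj0 x = x - ((\<Sum>i\<in>UNIV. x $ i) / real CARD('n)) *\<^sub>R (\<chi> i. 1)"

definition convex_exposure :: "(real ^ 'n::finite \<Rightarrow> 'n \<Rightarrow> real) \<Rightarrow> (real ^ 'n) set \<Rightarrow> bool" where
  "convex_exposure s D \<longleftrightarrow> convex ((\<lambda>p. proj0 (exposure s p)) ` D)"

end

theory Submission
  imports Defs
begin

lemma vec_nth_deriv[derivative_intros]:
  "((\<lambda>x::real^'n::finite. x $ j) has_derivative (\<lambda>h. h $ j)) F"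
  by (rule bounded_linear_imp_has_derivative[OF bounded_linear_vec_nth])

lemma aux_sum:
  fixes a q b :: "'n::finite \<Rightarrow> real" and C :: real
  shows "(\<Sum>j\<in>(UNIV::'n set). a j + q j * (2 * b j - C)) = (\<Sum>j\<in>UNIV. a j + 2 * q j * b j) - (\<Sum>j\<in>UNIV. q j) * C"
  by (simp add: sum.distrib sum_subtractf right_diff_distrib sum_distrib_right mult.assoc mult.left_commute)

lemma er_deriv:
  fixes p :: "real ^ 'n::finite"
  defines "S \<equiv> (\<Sum>k\<in>UNIV. (p $ k)^2)" and "T \<equiv> (\<Sum>k\<in>UNIV. p $ k)"
  shows "(expected_reward quad_score has_derivative
           (\<lambda>h. (\<chi> i. 4 * p $ i - 2 * p $ i * T - S) \<bullet> h)) (at p)"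
proof -
  have e: "expected_reward quad_score = (\<lambda>p::real^'n. \<Sum>j\<in>UNIV. p $ j * (2 * p $ j - (\<Sum>k\<in>UNIV. (p $ k)^2)))"
    by (auto simp: expected_reward_def quad_score_def fun_eq_iff)
  have d: "((\<lambda>p::real^'n. \<Sum>j\<in>UNIV. p $ j * (2 * p $ j - (\<Sum>k\<in>UNIV. (p $ k)^2))) has_derivative
     (\<lambda>h. \<Sum>j\<in>UNIV. h $ j * (2 * p $ j - S) + p $ j * (2 * h $ j - (\<Sum>k\<in>UNIV. 2 * p $ k * h $ k)))) (at p)"
    unfolding S_def
    apply (rule derivative_eq_intros refl)+
    apply (simp add: fun_eq_iff algebra_simps power2_eq_square sum_distrib_left)
    done
  have eq: "(\<Sum>j\<in>UNIV. h $ j * (2 * p $ j - S) + p $ j * (2 * h $ j - (\<Sum>k\<in>UNIV. 2 * p $ k * h $ k)))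
        = (\<chi> i. 4 * p $ i - 2 * p $ i * T - S) \<bullet> h" for h :: "real^'n"
  proof -
    have "(\<Sum>j\<in>UNIV. h $ j * (2 * p $ j - S) + p $ j * (2 * h $ j - (\<Sum>k\<in>UNIV. 2 * p $ k * h $ k)))
       = (\<Sum>j\<in>UNIV. h $ j * (2 * p $ j - S) + 2 * p $ j * h $ j) - T * (\<Sum>k\<in>UNIV. 2 * p $ k * h $ k)"
      unfolding T_def by (rule aux_sum)
    also have "\<dots> = (\<Sum>j\<in>UNIV. (4 * p $ j - 2 * p $ j * T - S) * h $ j)"
      by (simp add: algebra_simps sum.distrib sum_subtractf sum_distrib_left sum_distrib_right)
    finally show ?thesis by (simp add: inner_vec_def)
  qed
  show ?thesis using d unfolding e eq .
qed

lemma exposure_eq: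
  fixes p :: "real ^ 'n::finite"
  shows "exposure quad_score p = (\<chi> i. 4 * p $ i - 2 * p $ i * (\<Sum>k\<in>UNIV. p $ k) - (\<Sum>k\<in>UNIV. (p $ k)^2))"
  unfolding exposure_def
proof (rule the_equality)
  show "(expected_reward quad_score has_derivative (\<lambda>h. (\<chi> i. 4 * p $ i - 2 * p $ i * (\<Sum>k\<in>UNIV. p $ k) - (\<Sum>k\<in>UNIV. (p $ k)^2)) \<bullet> h)) (at p)"
    by (rule er_deriv)
next
  fix g assume "(expected_reward quad_score has_derivative (\<lambda>h. g \<bullet> h)) (at p)"
  with er_deriv[of p] have "(\<lambda>h. g \<bullet> h) = (\<lambda>h. (\<chi> i. 4 * p $ i - 2 * p $ i * (\<Sum>k\<in>UNIV. p $ k) - (\<Sum>k\<in>UNIV. (p $ k)^2)) \<bullet> h)"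
    using has_derivative_unique by blast
  then show "g = (\<chi> i. 4 * p $ i - 2 * p $ i * (\<Sum>k\<in>UNIV. p $ k) - (\<Sum>k\<in>UNIV. (p $ k)^2))"
    by (metis vector_eq_rdot)
qed

lemma proj0_ones: "proj0 (x - c *\<^sub>R (\<chi> i. 1) :: real^'n::finite) = proj0 x"
proof -
  have "real CARD('n) > 0" by simp
  then show ?thesis by (simp add: proj0_def sum_subtractf vec_eq_iff field_simps)
qed

lemma linear_proj0: "linear (proj0 :: real^'n::finite \<Rightarrow> real^'n)"
  unfolding linear_iff
  by (auto simp: proj0_def vec_eq_iff sum.distrib sum_distrib_left add_divide_distrib algebra_simps)

theorem propositionF3:
  fixes D :: "(real ^ 'n::finite) set"
  assumes "forecast_domain D"
  shows "convex_exposure quad_score D"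
proof -
  have sub: "D \<subseteq> prob_simplex" and cv: "convex D" using assms by (auto simp: forecast_domain_def)
  have "(\<lambda>p. proj0 (exposure quad_score p)) ` D = (\<lambda>p. proj0 (2 *\<^sub>R p)) ` D"
  proof (rule image_cong[OF refl])
    fix p assume "p \<in> D"
    then have T: "(\<Sum>k\<in>UNIV. p $ k) = 1" using sub by (auto simp: prob_simplex_def)
    have "exposure quad_score p = 2 *\<^sub>R p - (\<Sum>k\<in>UNIV. (p $ k)^2) *\<^sub>R (\<chi> i. 1)"
      by (simp add: exposure_eq T vec_eq_iff)
    then show "proj0 (exposure quad_score p) = proj0 (2 *\<^sub>R p)" by (simp add: proj0_ones)
  qed
  moreover have "convex ((\<lambda>p. proj0 (2 *\<^sub>R p)) ` D)"
    by (rule convex_linear_image[OF _ cv])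
       (auto simp: linear_iff scaleR_add_right linear_add[OF linear_proj0] linear_scale[OF linear_proj0])
  ultimately show ?thesis by (simp add: convex_exposure_def)
qed

end
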